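(* Let $d\ge1$ and $f(\rho)=K\ast\rho$ with $\sup_\xi(1+|\xi|^2)|\widehat K(\xi)|<\infty$ if $d\le2$ and $\sup_\xi|\xi|^2|\widehat K(\xi)|<\infty$ if $d\ge3$. Let $s\ge0$. There exists $C$ such that $$\|\nabla f(\rho)\|_{H^{s+1}(\mathbb R^d)}\le C\big(\|\rho\|_{H^s(\mathbb R^d)}+\|\rho\|_{L^1(\mathbb R^d)}\big)\quad\forall\rho\in H^s(\mathbb R^d)\cap L^1(\mathbb R^d).$$ If in addition $s>d/2$, there exists $C$ such that $\|f(\rho)\|_{L^\infty(\mathbb R^d)}\le C(\|\rho\|_{H^s}+\|\rho\|_{L^1})$ for all $\rho\in H^s(\mathbb R^d)\cap L^1(\mathbb R^d)$.
   Context: $\widehat K(\xi)=(2\pi)^{-d/2}\int e^{-ix\cdot\xi}K(x)dx$; $f(\rho)$ is defined by $\widehat{f(\rho)}=(2\pi)^{d/2}\widehat K\widehat\rho$. *)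

theory Defs
  imports "HOL-Probability.Probability"
begin

definition fourier :: "(real^'n::finite \<Rightarrow> complex) \<Rightarrow> real^'n \<Rightarrow> complex" where
  "fourier g \<xi> = complex_of_real ((2*pi) powr (- real CARD('n) / 2)) *
      (LINT x|lborel. cis (- (x \<bullet> \<xi>)) * g x)"

definition inv_fourier :: "(real^'n::finite \<Rightarrow> complex) \<Rightarrow> real^'n \<Rightarrow> complex" where
  "inv_fourier h x = complex_of_real ((2*pi) powr (- real CARD('n) / 2)) *
      (LINT \<xi>|lborel. cis (x \<bullet> \<xi>) * h \<xi>)"

definition ennsqrt :: "ennreal \<Rightarrow> ennreal" where
  "ennsqrt x = (if x = \<infinity> then \<infinity> else ennreal (sqrt (enn2real x)))"

text \<open>Squared H^s norm of a function given through its Fourier transform gh.\<close>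
definition sobolevF_sq :: "real \<Rightarrow> (real^'n::finite \<Rightarrow> complex) \<Rightarrow> ennreal" where
  "sobolevF_sq s gh = (\<integral>\<^sup>+\<xi>. ennreal ((1 + (norm \<xi>)\<^sup>2) powr s * (cmod (gh \<xi>))\<^sup>2) \<partial>lborel)"

definition Hs_norm :: "real \<Rightarrow> (real^'n::finite \<Rightarrow> real) \<Rightarrow> ennreal" where
  "Hs_norm s \<rho> = ennsqrt (sobolevF_sq s (fourier (\<lambda>x. complex_of_real (\<rho> x))))"

definition L1_norm :: "(real^'n::finite \<Rightarrow> real) \<Rightarrow> ennreal" where
  "L1_norm \<rho> = (\<integral>\<^sup>+x. ennreal \<bar>\<rho> x\<bar> \<partial>lborel)"

definition in_Hs_L1 :: "real \<Rightarrow> (real^'n::finite \<Rightarrow> real) \<Rightarrow> bool" where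
  "in_Hs_L1 s \<rho> \<longleftrightarrow> integrable lborel \<rho> \<and>
      sobolevF_sq s (fourier (\<lambda>x. complex_of_real (\<rho> x))) < \<infinity>"

text \<open>Fourier transform of f(rho): (2 pi)^(d/2) Khat rhohat.\<close>
definition nonlocal_hat :: "(real^'n::finite \<Rightarrow> complex) \<Rightarrow> (real^'n \<Rightarrow> real) \<Rightarrow> real^'n \<Rightarrow> complex" where
  "nonlocal_hat Khat \<rho> \<xi> = complex_of_real ((2*pi) powr (real CARD('n) / 2)) * Khat \<xi> *
      fourier (\<lambda>x. complex_of_real (\<rho> x)) \<xi>"

definition nonlocal :: "(real^'n::finite \<Rightarrow> complex) \<Rightarrow> (real^'n \<Rightarrow> real) \<Rightarrow> real^'n \<Rightarrow> complex" where
  "nonlocal Khat \<rho> = inv_fourier (nonlocal_hat Khat \<rho>)"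

text \<open>H^(s+1) norm of the gradient of f(rho): square root of the sum over j of the
  squared H^(s+1) norms of the partial derivatives, whose Fourier transforms are i xi_j times that of f(rho).\<close>
definition grad_nonlocal_Hs_norm :: "real \<Rightarrow> (real^'n::finite \<Rightarrow> complex) \<Rightarrow> (real^'n \<Rightarrow> real) \<Rightarrow> ennreal" where
  "grad_nonlocal_Hs_norm s Khat \<rho> = ennsqrt (\<Sum>j\<in>UNIV.
      sobolevF_sq s (\<lambda>\<xi>. \<i> * complex_of_real (\<xi> $ j) * nonlocal_hat Khat \<rho> \<xi>))"

end

theory Submission
  imports Defs
begin

lemma ennreal_le_suminf: "f k \<le> (\<Sum>i. f i :: ennreal)"
  using sum_le_suminf[of f "{k}"] by (auto intro: summableI)

lemma radial_bound:
  fixes g :: "real^'n::finite \<Rightarrow> ennreal" and r :: "nat \<Rightarrow> real" and c :: "nat \<Rightarrow> ennreal"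
  assumes r: "\<And>k. r k \<ge> 0"
    and H: "\<And>\<xi>. g \<xi> = 0 \<or> (\<exists>k. norm \<xi> \<le> r k \<and> g \<xi> \<le> c k)"
  shows "(\<integral>\<^sup>+\<xi>. g \<xi> \<partial>lborel) \<le> (\<Sum>k. c k * ennreal (unit_ball_vol (real CARD('n)) * r k ^ CARD('n)))"
proof -
  have pw: "g \<xi> \<le> (\<Sum>k. c k * indicator (cball 0 (r k)) \<xi>)" for \<xi>
  proof -
    from H[of \<xi>] show ?thesis
    proof
      assume "\<exists>k. norm \<xi> \<le> r k \<and> g \<xi> \<le> c k"
      then obtain k where k: "norm \<xi> \<le> r k" "g \<xi> \<le> c k" by blast
      have "g \<xi> \<le> c k * indicator (cball 0 (r k)) \<xi>" using k by (simp add: indicator_def)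
      also have "\<dots> \<le> (\<Sum>k. c k * indicator (cball 0 (r k)) \<xi>)" by (rule ennreal_le_suminf)
      finally show ?thesis .
    qed simp
  qed
  have "(\<integral>\<^sup>+\<xi>. g \<xi> \<partial>lborel) \<le> (\<integral>\<^sup>+\<xi>. (\<Sum>k. c k * indicator (cball 0 (r k)) \<xi>) \<partial>(lborel::(real^'n) measure))"
    by (rule nn_integral_mono, rule pw)
  also have "\<dots> = (\<Sum>k. \<integral>\<^sup>+\<xi>. c k * indicator (cball 0 (r k)) \<xi> \<partial>(lborel::(real^'n) measure))"
    by (rule nn_integral_suminf) (intro borel_measurable_times_ennreal borel_measurable_const borel_measurable_indicator, simp)
  also have "\<dots> = (\<Sum>k. c k * ennreal (unit_ball_vol (real CARD('n)) * r k ^ CARD('n)))"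
    using r by (intro suminf_cong) (simp add: nn_integral_cmult_indicator emeasure_cball del: nn_integral_indicator_singleton)
  finally show ?thesis .
qed

lemma geom_sum_finite:
  fixes a q :: real
  assumes "a \<ge> 0" "0 \<le> q" "q < 1"
  shows "(\<Sum>k. ennreal (a * q ^ k)) < \<infinity>"
proof -
  have "summable (\<lambda>k. a * q ^ k)" using assms by (intro summable_mult summable_geometric) simp
  then show ?thesis using assms by (subst suminf_ennreal2) auto
qed

lemma dyadic:
  fixes t :: real
  assumes "1 \<le> t"
  shows "\<exists>k::nat. 2 ^ k \<le> t \<and> t < 2 ^ Suc k"
proof -
  define k where "k = nat \<lfloor>log 2 t\<rfloor>"
  have l0: "0 \<le> log 2 t" using assms by simp
  have k1: "real k \<le> log 2 t" using l0 unfolding k_def by linarith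
  have k2: "log 2 t < real k + 1" using l0 unfolding k_def by linarith
  have t0: "t > 0" using assms by simp
  have "2 powr real k \<le> t" using k1 le_log_iff[of 2 t "real k"] t0 by simp
  moreover have "t < 2 powr (real k + 1)" using k2 log_less_iff[of 2 t "real k + 1"] t0 by simp
  moreover have "2 powr real k = (2::real) ^ k" by (simp add: powr_realpow)
  moreover have "2 powr (real k + 1) = (2::real) ^ Suc k"
    by (metis of_nat_Suc add.commute powr_realpow zero_less_numeral)
  ultimately show ?thesis by auto
qed

lemma inv_sq_finite:
  assumes d3: "CARD('n::finite) \<ge> 3"
  shows "(\<integral>\<^sup>+\<xi>. indicator (ball 0 1) \<xi> * ennreal (1 / (norm \<xi>)\<^sup>2) \<partial>(lborel::(real^'n) measure)) < \<infinity>"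
proof -
  define V where "V = unit_ball_vol (real CARD('n))"
  have V0: "V \<ge> 0" unfolding V_def by simp
  have "(\<integral>\<^sup>+\<xi>. indicator (ball 0 1) \<xi> * ennreal (1 / (norm \<xi>)\<^sup>2) \<partial>(lborel::(real^'n) measure))
      \<le> (\<Sum>k. ennreal (4 * 4 ^ k) * ennreal (V * ((1/2::real) ^ k) ^ CARD('n)))"
    unfolding V_def
  proof (rule radial_bound)
    fix \<xi> :: "real^'n"
    show "indicator (ball 0 1) \<xi> * ennreal (1 / (norm \<xi>)\<^sup>2) = 0 \<or>
       (\<exists>k. norm \<xi> \<le> (1/2) ^ k \<and> indicator (ball 0 1) \<xi> * ennreal (1 / (norm \<xi>)\<^sup>2) \<le> ennreal (4 * 4 ^ k))"
    proof (cases "\<xi> = 0 \<or> norm \<xi> \<ge> 1")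
      case True
      then show ?thesis by (auto simp: indicator_def)
    next
      case False
      then have n0: "norm \<xi> > 0" "norm \<xi> < 1" by auto
      define t where "t = 1 / norm \<xi>"
      have t1: "1 \<le> t" using n0 unfolding t_def by simp
      obtain k :: nat where k: "2 ^ k \<le> t" "t < 2 ^ Suc k" using dyadic[OF t1] by blast
      have "norm \<xi> = 1 / t" using n0 unfolding t_def by simp
      also have "\<dots> \<le> 1 / 2 ^ k" using k t1 by (intro divide_left_mono) auto
      also have "\<dots> = (1/2) ^ k" by (simp add: power_one_over)
      finally have a: "norm \<xi> \<le> (1/2) ^ k" .
      have "1 / (norm \<xi>)\<^sup>2 = t\<^sup>2" unfolding t_def by (simp add: power_one_over)
      also have "\<dots> \<le> (2 ^ Suc k)\<^sup>2" using k t1 by (intro power_mono) auto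
      also have "\<dots> = 4 * 4 ^ k" by (simp add: power_mult_distrib[symmetric] power_even_eq power2_eq_square)
      finally have b: "1 / (norm \<xi>)\<^sup>2 \<le> 4 * 4 ^ k" .
      show ?thesis using a b n0 by (intro disjI2 exI[of _ k]) (auto simp: indicator_def ennreal_leI)
    qed
  qed simp
  also have "\<dots> \<le> (\<Sum>k. ennreal (4 * V * (1/2) ^ k))"
  proof (rule suminf_le)
    fix k :: nat
    have "((1/2::real) ^ k) ^ CARD('n) \<le> ((1/2) ^ k) ^ 3"
      using d3 by (intro power_decreasing) (auto simp: power_le_one)
    also have "\<dots> = (1/8) ^ k" by (simp add: power_mult[symmetric] mult.commute[of k] power_mult power_one_over)
    finally have e: "((1/2::real) ^ k) ^ CARD('n) \<le> (1/8) ^ k" .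
    have "4 * 4 ^ k * (V * ((1/2::real) ^ k) ^ CARD('n)) \<le> 4 * 4 ^ k * (V * (1/8) ^ k)"
      using e V0 by (intro mult_left_mono) auto
    also have "\<dots> = 4 * V * (4 ^ k * (1/8) ^ k)" by simp
    also have "\<dots> = 4 * V * (4 * (1/8)) ^ k" by (simp only: power_mult_distrib)
    also have "\<dots> = 4 * V * (1/2) ^ k" by simp
    finally show "ennreal (4 * 4 ^ k) * ennreal (V * ((1/2::real) ^ k) ^ CARD('n)) \<le> ennreal (4 * V * (1/2) ^ k)"
      using V0 by (simp add: ennreal_mult''[symmetric] ennreal_leI)
  qed (auto intro: summableI)
  also have "\<dots> < \<infinity>" using V0 by (intro geom_sum_finite) auto
  finally show ?thesis .
qed

lemma weight_finite:
  fixes s :: real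
  assumes ds: "real CARD('n::finite) < 2 * s" and s0: "s \<ge> 0"
  shows "(\<integral>\<^sup>+\<xi>. ennreal ((1 + (norm \<xi>)\<^sup>2) powr (-s)) \<partial>(lborel::(real^'n) measure)) < \<infinity>"
proof -
  define V where "V = unit_ball_vol (real CARD('n))"
  have V0: "V \<ge> 0" unfolding V_def by simp
  define q where "q = (4::real) powr (-s)"
  have q0: "q > 0" unfolding q_def by simp
  have g1: "(1 + (norm \<xi>)\<^sup>2) powr (-s) \<le> 1" for \<xi> :: "real^'n"
    using s0 by (simp add: powr_minus divide_simps ge_one_powr_ge_zero)
  have fs: "(4::real) powr s \<ge> 1" using s0 by (simp add: ge_one_powr_ge_zero)
  have "(\<integral>\<^sup>+\<xi>. ennreal ((1 + (norm \<xi>)\<^sup>2) powr (-s)) \<partial>(lborel::(real^'n) measure))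
      \<le> (\<Sum>k. ennreal (4 powr s * q ^ k) * ennreal (V * (2 ^ k) ^ CARD('n)))"
    unfolding V_def
  proof (rule radial_bound)
    fix \<xi> :: "real^'n"
    show "ennreal ((1 + (norm \<xi>)\<^sup>2) powr (-s)) = 0 \<or>
       (\<exists>k. norm \<xi> \<le> 2 ^ k \<and> ennreal ((1 + (norm \<xi>)\<^sup>2) powr (-s)) \<le> ennreal (4 powr s * q ^ k))"
    proof (cases "norm \<xi> < 1")
      case True
      then show ?thesis using g1[of \<xi>] fs
        by (intro disjI2 exI[of _ 0]) (auto intro!: ennreal_leI)
    next
      case False
      then have n1: "norm \<xi> \<ge> 1" by simp
      obtain j :: nat where j: "2 ^ j \<le> norm \<xi>" "norm \<xi> < 2 ^ Suc j" using dyadic[OF n1] by blast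
      have "(1 + (norm \<xi>)\<^sup>2) powr (-s) \<le> ((2 ^ j)\<^sup>2) powr (-s)"
      proof (rule powr_mono2')
        have h: "((2::real) ^ j)\<^sup>2 \<le> (norm \<xi>)\<^sup>2" by (rule power_mono) (use j in auto)
        then show "((2::real) ^ j)\<^sup>2 \<le> 1 + (norm \<xi>)\<^sup>2" by linarith
      qed (use s0 in auto)
      also have "((2::real) ^ j)\<^sup>2 = 4 powr (real j)"
        by (simp add: power_mult[symmetric] powr_realpow mult.commute[of j] power_mult)
      also have "(4 powr (real j)) powr (-s) = q ^ j"
        unfolding q_def by (simp add: powr_powr powr_realpow[symmetric] mult.commute)
      also have "q ^ j = 4 powr s * q ^ Suc j"
        unfolding q_def by (simp add: powr_minus)
      finally have b: "(1 + (norm \<xi>)\<^sup>2) powr (-s) \<le> 4 powr s * q ^ Suc j" .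
      show ?thesis using b j by (intro disjI2 exI[of _ "Suc j"]) (auto intro!: ennreal_leI)
    qed
  qed simp
  also have "\<dots> = (\<Sum>k. ennreal (4 powr s * V * (q * 2 ^ CARD('n)) ^ k))"
  proof (rule suminf_cong)
    fix k :: nat
    have "4 powr s * q ^ k * (V * (2 ^ k) ^ CARD('n)) = 4 powr s * V * (q * 2 ^ CARD('n)) ^ k"
      by (simp add: power_mult_distrib power_mult[symmetric] mult.commute[of k])
    then show "ennreal (4 powr s * q ^ k) * ennreal (V * (2 ^ k) ^ CARD('n)) = ennreal (4 powr s * V * (q * 2 ^ CARD('n)) ^ k)"
      using V0 q0 by (simp add: ennreal_mult''[symmetric])
  qed
  also have "\<dots> < \<infinity>"
  proof (rule geom_sum_finite)
    have "q * 2 ^ CARD('n) = 2 powr (real CARD('n) - 2 * s)"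
    proof -
      have "q = 2 powr (- 2 * s)" unfolding q_def
        using powr_powr[of 2 2 "-s"] by simp
      then show ?thesis by (simp add: powr_realpow[symmetric] powr_add[symmetric])
    qed
    also have "\<dots> < 2 powr 0" using ds by (intro powr_less_mono) auto
    finally show "q * 2 ^ CARD('n) < 1" by simp
  qed (use V0 q0 in auto)
  finally show ?thesis .
qed

lemma near0_finite:
  fixes K :: "real^'n::finite \<Rightarrow> complex"
  assumes meas: "K \<in> borel_measurable lborel"
    and low: "CARD('n) \<le> 2 \<Longrightarrow> (\<exists>M. \<forall>\<xi>. (1 + (norm \<xi>)\<^sup>2) * cmod (K \<xi>) \<le> M)"
    and high: "CARD('n) \<ge> 3 \<Longrightarrow> (\<exists>M. \<forall>\<xi>. (norm \<xi>)\<^sup>2 * cmod (K \<xi>) \<le> M)"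
  shows "(\<integral>\<^sup>+\<xi>. indicator (ball 0 1) \<xi> * ennreal (cmod (K \<xi>)) \<partial>lborel) < \<infinity>"
proof (cases "CARD('n) \<le> 2")
  case True
  then obtain M where M: "\<And>\<xi>. (1 + (norm \<xi>)\<^sup>2) * cmod (K \<xi>) \<le> M" using low by blast
  have KM: "cmod (K \<xi>) \<le> M" for \<xi>
  proof -
    have "cmod (K \<xi>) \<le> (1 + (norm \<xi>)\<^sup>2) * cmod (K \<xi>)"
      by (simp add: distrib_right)
    then show ?thesis using M[of \<xi>] by linarith
  qed
  have "(\<integral>\<^sup>+\<xi>. indicator (ball 0 1) \<xi> * ennreal (cmod (K \<xi>)) \<partial>lborel)
      \<le> (\<integral>\<^sup>+\<xi>. ennreal M * indicator (ball 0 1) \<xi> \<partial>(lborel::(real^'n) measure))"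
    by (rule nn_integral_mono) (auto simp: indicator_def KM ennreal_leI)
  also have "\<dots> = ennreal M * emeasure lborel (ball (0::real^'n) 1)"
    by (simp add: nn_integral_cmult_indicator del: nn_integral_indicator_singleton)
  also have "\<dots> < \<infinity>" by (simp add: emeasure_ball ennreal_mult_less_top)
  finally show ?thesis .
next
  case False
  then obtain M where M: "\<And>\<xi>. (norm \<xi>)\<^sup>2 * cmod (K \<xi>) \<le> M" using high by force
  have "(\<integral>\<^sup>+\<xi>. indicator (ball 0 1) \<xi> * ennreal (cmod (K \<xi>)) \<partial>lborel)
      \<le> (\<integral>\<^sup>+\<xi>. ennreal M * (indicator (ball 0 1) \<xi> * ennreal (1 / (norm \<xi>)\<^sup>2)) \<partial>(lborel::(real^'n) measure))"
  proof (rule nn_integral_mono_AE)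
    show "AE \<xi> in lborel. indicator (ball 0 1) \<xi> * ennreal (cmod (K \<xi>)) \<le> ennreal M * (indicator (ball 0 1) \<xi> * ennreal (1 / (norm \<xi>)\<^sup>2))"
      using AE_lborel_singleton[of 0]
    proof eventually_elim
      case (elim \<xi>)
      then have n0: "norm \<xi> > 0" by simp
      have "cmod (K \<xi>) \<le> M * (1 / (norm \<xi>)\<^sup>2)"
        using M[of \<xi>] n0 by (simp add: field_simps)
      moreover have "M \<ge> 0" using M[of \<xi>] by (meson mult_nonneg_nonneg norm_ge_zero order_trans zero_le_power2)
      ultimately show ?case
        by (auto simp: indicator_def ennreal_mult''[symmetric] intro!: ennreal_leI)
    qed
  qed
  also have "\<dots> = ennreal M * (\<integral>\<^sup>+\<xi>. indicator (ball 0 1) \<xi> * ennreal (1 / (norm \<xi>)\<^sup>2) \<partial>(lborel::(real^'n) measure))"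
  proof (rule nn_integral_cmult)
    have [measurable]: "ball (0::real^'n) 1 \<in> sets borel" by simp
    show "(\<lambda>\<xi>::real^'n. indicator (ball 0 1) \<xi> * ennreal (1 / (norm \<xi>)\<^sup>2)) \<in> borel_measurable lborel"
      by measurable
  qed
  also have "\<dots> < \<infinity>" using inv_sq_finite[where 'n='n] False by (simp add: ennreal_mult_less_top)
  finally show ?thesis .
qed

lemma fourier_meas:
  fixes g :: "real^'n::finite \<Rightarrow> complex"
  assumes [measurable]: "g \<in> borel_measurable lborel"
  shows "fourier g \<in> borel_measurable lborel"
proof -
  have c0: "(\<lambda>p::(real^'n) \<times> (real^'n). cis (- (snd p \<bullet> fst p))) \<in> borel_measurable borel"
    by (intro borel_measurable_continuous_onI continuous_intros)
  have c: "(\<lambda>(\<xi>::real^'n,x::real^'n). cis (- (x \<bullet> \<xi>))) \<in> borel_measurable (lborel \<Otimes>\<^sub>M lborel)"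
    unfolding lborel_prod using c0 by (simp add: case_prod_beta')
  have "(\<lambda>(\<xi>,x). cis (- (x \<bullet> \<xi>)) * g x) \<in> borel_measurable (lborel \<Otimes>\<^sub>M (lborel::(real^'n) measure))"
    using c by measurable
  then have "(\<lambda>\<xi>. LINT x|lborel. cis (- (x \<bullet> \<xi>)) * g x) \<in> borel_measurable lborel"
    by (intro lborel.borel_measurable_lebesgue_integral) simp
  then show ?thesis unfolding fourier_def[abs_def] by measurable
qed

lemma inv_fourier_meas:
  fixes g :: "real^'n::finite \<Rightarrow> complex"
  assumes [measurable]: "g \<in> borel_measurable lborel"
  shows "inv_fourier g \<in> borel_measurable lborel"
proof -
  have c0: "(\<lambda>p::(real^'n) \<times> (real^'n). cis (fst p \<bullet> snd p)) \<in> borel_measurable borel"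
    by (intro borel_measurable_continuous_onI continuous_intros)
  have c: "(\<lambda>(x::real^'n,\<xi>::real^'n). cis (x \<bullet> \<xi>)) \<in> borel_measurable (lborel \<Otimes>\<^sub>M lborel)"
    unfolding lborel_prod using c0 by (simp add: case_prod_beta')
  have "(\<lambda>(x,\<xi>). cis (x \<bullet> \<xi>) * g \<xi>) \<in> borel_measurable (lborel \<Otimes>\<^sub>M (lborel::(real^'n) measure))"
    using c by measurable
  then have "(\<lambda>x. LINT \<xi>|lborel. cis (x \<bullet> \<xi>) * g \<xi>) \<in> borel_measurable lborel"
    by (intro lborel.borel_measurable_lebesgue_integral) simp
  then show ?thesis unfolding inv_fourier_def[abs_def] by measurable
qed

lemma fourier_bound:
  fixes \<rho> :: "real^'n::finite \<Rightarrow> real"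
  shows "cmod (fourier (\<lambda>x. complex_of_real (\<rho> x)) \<xi>)
     \<le> (2*pi) powr (- real CARD('n) / 2) * (\<integral>x. \<bar>\<rho> x\<bar> \<partial>lborel)"
proof -
  have "cmod (fourier (\<lambda>x. complex_of_real (\<rho> x)) \<xi>)
      = (2*pi) powr (- real CARD('n) / 2) * cmod (LINT x|lborel. cis (- (x \<bullet> \<xi>)) * complex_of_real (\<rho> x))"
    unfolding fourier_def by (simp add: norm_mult)
  also have "\<dots> \<le> (2*pi) powr (- real CARD('n) / 2) * (\<integral>x. cmod (cis (- (x \<bullet> \<xi>)) * complex_of_real (\<rho> x)) \<partial>lborel)"
    by (intro mult_left_mono integral_norm_bound) simp
  also have "(\<integral>x. cmod (cis (- (x \<bullet> \<xi>)) * complex_of_real (\<rho> x)) \<partial>lborel) = (\<integral>x. \<bar>\<rho> x\<bar> \<partial>lborel)"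
    by (simp add: norm_mult)
  finally show ?thesis .
qed

lemma ennsqrt_le:
  assumes "x \<le> ennreal t" "t \<ge> 0"
  shows "ennsqrt x \<le> ennreal (sqrt t)"
proof -
  have xt: "x \<noteq> \<infinity>" using assms(1) by (auto simp: top_unique)
  then have "enn2real x \<le> t" using assms by (simp add: enn2real_leI)
  then show ?thesis using xt unfolding ennsqrt_def by (auto intro!: ennreal_leI)
qed

lemma ennsqrt_fin: "x < \<infinity> \<Longrightarrow> ennsqrt x = ennreal (sqrt (enn2real x))"
  unfolding ennsqrt_def by auto

lemma ennreal_sq_le:
  fixes X :: ennreal
  assumes "X ^ 2 \<le> ennreal t" "t \<ge> 0"
  shows "X \<le> ennreal (sqrt t)"
proof (cases X)
  case (real r)
  then have "ennreal (r ^ 2) \<le> ennreal t" using assms by (simp add: ennreal_power)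
  then have "r ^ 2 \<le> t" using assms(2) by (simp add: ennreal_le_iff)
  then have "r \<le> sqrt t" using real by (simp add: real_le_rsqrt)
  then show ?thesis using real by (simp add: ennreal_leI)
next
  case top
  then show ?thesis using assms by (simp add: top_unique)
qed

theorem mainTheorem8:
  fixes Khat :: "real^'n::finite \<Rightarrow> complex" and s :: real
  assumes Khat_meas: "Khat \<in> borel_measurable lborel"
    and hK_low: "CARD('n) \<le> 2 \<Longrightarrow> (\<exists>M. \<forall>\<xi>. (1 + (norm \<xi>)\<^sup>2) * cmod (Khat \<xi>) \<le> M)"
    and hK_high: "CARD('n) \<ge> 3 \<Longrightarrow> (\<exists>M. \<forall>\<xi>. (norm \<xi>)\<^sup>2 * cmod (Khat \<xi>) \<le> M)"
    and s_nonneg: "s \<ge> 0"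
  shows "(\<exists>C::real. \<forall>\<rho>. in_Hs_L1 s \<rho> \<longrightarrow>
            grad_nonlocal_Hs_norm (s + 1) Khat \<rho> \<le> ennreal C * (Hs_norm s \<rho> + L1_norm \<rho>))
       \<and> (s > real CARD('n) / 2 \<longrightarrow>
            (\<exists>C::real. \<forall>\<rho>. in_Hs_L1 s \<rho> \<longrightarrow>
               esssup lborel (\<lambda>x. ereal (cmod (nonlocal Khat \<rho> x)))
                 \<le> ereal (C * (enn2real (Hs_norm s \<rho>) + enn2real (L1_norm \<rho>)))))"
proof -
  note [measurable] = Khat_meas
  have Kb[measurable]: "Khat \<in> borel_measurable borel" using Khat_meas by simp
  have ballb[measurable]: "ball (0::real^'n) 1 \<in> sets borel" by simp
  define c where "c = (2*pi) powr (- real CARD('n) / 2)"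
  define P where "P = (2*pi) powr (real CARD('n) / 2)"
  have c0: "c > 0" and P0: "P > 0" unfolding c_def P_def by auto
  have cP: "c * P = 1" unfolding c_def P_def by (simp add: powr_add[symmetric])
  obtain M0 where M0: "\<And>\<xi>. (norm \<xi>)\<^sup>2 * cmod (Khat \<xi>) \<le> M0"
  proof (cases "CARD('n) \<le> 2")
    case True
    then obtain M where M: "\<And>\<xi>. (1 + (norm \<xi>)\<^sup>2) * cmod (Khat \<xi>) \<le> M" using hK_low by blast
    have "(norm \<xi>)\<^sup>2 * cmod (Khat \<xi>) \<le> M" for \<xi>
      using M[of \<xi>] by (smt (verit, ccfv_SIG) mult_right_mono norm_ge_zero)
    then show ?thesis using that by blast
  next
    case False
    then show ?thesis using hK_high that by force
  qed
  have M0pos: "M0 \<ge> 0" using M0[of 0] by simp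
  have KM: "cmod (Khat \<xi>) \<le> M0" if "norm \<xi> \<ge> 1" for \<xi>
  proof -
    have "1 \<le> (norm \<xi>)\<^sup>2" using that by (simp add: one_le_power)
    then have "cmod (Khat \<xi>) \<le> (norm \<xi>)\<^sup>2 * cmod (Khat \<xi>)"
      by (simp add: mult_le_cancel_right1)
    then show ?thesis using M0[of \<xi>] by linarith
  qed
  define B where "B = (\<integral>\<^sup>+\<xi>. indicator (ball 0 1) \<xi> * ennreal (cmod (Khat \<xi>)) \<partial>(lborel::(real^'n) measure))"
  have Bfin: "B < \<infinity>" unfolding B_def using near0_finite[OF Khat_meas hK_low hK_high] .
  define Br where "Br = enn2real B"
  have BBr: "B = ennreal Br" and Br0: "Br \<ge> 0" using Bfin unfolding Br_def by (auto simp: less_top)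
  define W where "W = (\<integral>\<^sup>+\<xi>. ennreal ((1 + (norm \<xi>)\<^sup>2) powr (-s)) \<partial>(lborel::(real^'n) measure))"
  define Wr where "Wr = enn2real W"
  have Wr0: "Wr \<ge> 0" unfolding Wr_def by simp
  define A where "A = 2 * M0\<^sup>2 * P\<^sup>2"
  define Bc where "Bc = 2 powr (s + 1) * M0"
  have A0: "A \<ge> 0" and Bc0: "Bc \<ge> 0" unfolding A_def Bc_def using M0pos by auto
  define C1 where "C1 = sqrt A + sqrt (Bc * Br)"
  define C2 where "C2 = c * Br + M0 * sqrt Wr"
  have key: "grad_nonlocal_Hs_norm (s + 1) Khat \<rho> \<le> ennreal C1 * (Hs_norm s \<rho> + L1_norm \<rho>)
     \<and> (s > real CARD('n) / 2 \<longrightarrow>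
          esssup lborel (\<lambda>x. ereal (cmod (nonlocal Khat \<rho> x)))
                 \<le> ereal (C2 * (enn2real (Hs_norm s \<rho>) + enn2real (L1_norm \<rho>))))"
    if \<rho>: "in_Hs_L1 s \<rho>" for \<rho>
  proof -
    define R where "R = fourier (\<lambda>x. complex_of_real (\<rho> x))"
    define L where "L = (\<integral>x. \<bar>\<rho> x\<bar> \<partial>lborel)"
    have int: "integrable lborel \<rho>" and Hfin: "sobolevF_sq s R < \<infinity>"
      using \<rho> unfolding in_Hs_L1_def R_def by auto
    have [measurable]: "\<rho> \<in> borel_measurable lborel" using int by (simp add: borel_measurable_integrable)
    have Rm[measurable]: "R \<in> borel_measurable lborel" unfolding R_def by (rule fourier_meas) measurable
    have RL: "cmod (R \<xi>) \<le> c * L" for \<xi> using fourier_bound unfolding R_def c_def L_def by blast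
    have L0: "L \<ge> 0" unfolding L_def by simp
    define Hr where "Hr = enn2real (sobolevF_sq s R)"
    have HHr: "sobolevF_sq s R = ennreal Hr" and Hr0: "Hr \<ge> 0"
      using Hfin unfolding Hr_def by (auto simp: less_top)
    have Hs: "Hs_norm s \<rho> = ennreal (sqrt Hr)"
      unfolding Hs_norm_def using ennsqrt_fin[OF Hfin] unfolding R_def Hr_def by simp
    have L1: "L1_norm \<rho> = ennreal L"
      unfolding L1_norm_def L_def by (rule nn_integral_eq_integral) (use int in auto)
    have h_eq: "nonlocal_hat Khat \<rho> \<xi> = complex_of_real P * Khat \<xi> * R \<xi>" for \<xi>
      unfolding nonlocal_hat_def P_def R_def by simp
    have hm[measurable]: "nonlocal_hat Khat \<rho> \<in> borel_measurable lborel"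
      unfolding h_eq[abs_def] by measurable
    have hnorm: "cmod (nonlocal_hat Khat \<rho> \<xi>) = P * cmod (Khat \<xi>) * cmod (R \<xi>)" for \<xi>
      using P0 by (simp add: h_eq norm_mult)
    define \<Phi> where "\<Phi> \<xi> = ennreal ((1 + (norm \<xi>)\<^sup>2) powr (s + 1) * ((norm \<xi>)\<^sup>2 * (cmod (nonlocal_hat Khat \<rho> \<xi>))\<^sup>2))" for \<xi> :: "real^'n"
    have nsq: "(norm \<xi>)\<^sup>2 = (\<Sum>j\<in>UNIV. (\<xi> $ j)\<^sup>2)" for \<xi> :: "real^'n"
      by (simp add: norm_vec_def L2_set_def sum_nonneg)
    have sumeq: "(\<Sum>j\<in>UNIV. sobolevF_sq (s + 1) (\<lambda>\<xi>. \<i> * complex_of_real (\<xi> $ j) * nonlocal_hat Khat \<rho> \<xi>))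
        = (\<integral>\<^sup>+\<xi>. \<Phi> \<xi> \<partial>lborel)"
    proof -
      have "(\<Sum>j\<in>UNIV. sobolevF_sq (s + 1) (\<lambda>\<xi>. \<i> * complex_of_real (\<xi> $ j) * nonlocal_hat Khat \<rho> \<xi>))
          = (\<integral>\<^sup>+\<xi>. (\<Sum>j\<in>UNIV. ennreal ((1 + (norm \<xi>)\<^sup>2) powr (s + 1) * (cmod (\<i> * complex_of_real (\<xi> $ j) * nonlocal_hat Khat \<rho> \<xi>))\<^sup>2)) \<partial>lborel)"
        unfolding sobolevF_sq_def by (rule nn_integral_sum[symmetric]) measurable
      also have "\<dots> = (\<integral>\<^sup>+\<xi>. \<Phi> \<xi> \<partial>lborel)"
      proof (rule nn_integral_cong)
        fix \<xi> :: "real^'n"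
        have "(\<Sum>j\<in>UNIV. ennreal ((1 + (norm \<xi>)\<^sup>2) powr (s + 1) * (cmod (\<i> * complex_of_real (\<xi> $ j) * nonlocal_hat Khat \<rho> \<xi>))\<^sup>2))
            = ennreal (\<Sum>j\<in>UNIV. (1 + (norm \<xi>)\<^sup>2) powr (s + 1) * (cmod (\<i> * complex_of_real (\<xi> $ j) * nonlocal_hat Khat \<rho> \<xi>))\<^sup>2)"
          by (rule sum_ennreal) simp
        also have "(\<Sum>j\<in>UNIV. (1 + (norm \<xi>)\<^sup>2) powr (s + 1) * (cmod (\<i> * complex_of_real (\<xi> $ j) * nonlocal_hat Khat \<rho> \<xi>))\<^sup>2)
            = (1 + (norm \<xi>)\<^sup>2) powr (s + 1) * ((\<Sum>j\<in>UNIV. (\<xi> $ j)\<^sup>2) * (cmod (nonlocal_hat Khat \<rho> \<xi>))\<^sup>2)"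
          by (simp add: norm_mult power_mult_distrib sum_distrib_left sum_distrib_right mult.assoc)
        finally show "(\<Sum>j\<in>UNIV. ennreal ((1 + (norm \<xi>)\<^sup>2) powr (s + 1) * (cmod (\<i> * complex_of_real (\<xi> $ j) * nonlocal_hat Khat \<rho> \<xi>))\<^sup>2)) = \<Phi> \<xi>"
          unfolding \<Phi>_def nsq .
      qed
      finally show ?thesis .
    qed
    have pw: "\<Phi> \<xi> \<le> ennreal (A * ((1 + (norm \<xi>)\<^sup>2) powr s * (cmod (R \<xi>))\<^sup>2))
        + ennreal (Bc * L\<^sup>2) * (indicator (ball 0 1) \<xi> * ennreal (cmod (Khat \<xi>)))" for \<xi> :: "real^'n"
    proof -
      define n where "n = norm \<xi>"
      define k where "k = cmod (Khat \<xi>)"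
      define r where "r = cmod (R \<xi>)"
      define w where "w = 1 + n\<^sup>2"
      have n0: "n \<ge> 0" and k0: "k \<ge> 0" and r0: "r \<ge> 0" and w1: "w \<ge> 1"
        unfolding n_def k_def r_def w_def by auto
      have nk: "n\<^sup>2 * k \<le> M0" unfolding n_def k_def by (rule M0)
      have rcl: "r \<le> c * L" unfolding r_def by (rule RL)
      have \<Phi>v: "\<Phi> \<xi> = ennreal (w powr (s + 1) * (P\<^sup>2 * ((n\<^sup>2 * k) * k * r\<^sup>2)))"
        unfolding \<Phi>_def hnorm n_def k_def r_def w_def by (simp add: power_mult_distrib mult_ac power2_eq_square)
      show ?thesis
      proof (cases "n < 1")
        case True
        have ind: "indicator (ball 0 1) \<xi> = (1::ennreal)" using True unfolding n_def by (simp add: indicator_def)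
        have w2: "w powr (s + 1) \<le> 2 powr (s + 1)"
          unfolding w_def using True n0 s_nonneg
          by (intro powr_mono2) (auto simp: power_le_one)
        have "(n\<^sup>2 * k) * k * r\<^sup>2 \<le> M0 * k * (c * L)\<^sup>2"
          using nk k0 r0 rcl M0pos by (intro mult_mono power_mono) auto
        then have "P\<^sup>2 * ((n\<^sup>2 * k) * k * r\<^sup>2) \<le> P\<^sup>2 * (M0 * k * (c * L)\<^sup>2)"
          by (intro mult_left_mono) auto
        also have "\<dots> = M0 * k * L\<^sup>2 * (c * P)\<^sup>2" by (simp add: power_mult_distrib mult_ac)
        also have "\<dots> = M0 * k * L\<^sup>2" using cP by simp
        finally have e1: "P\<^sup>2 * ((n\<^sup>2 * k) * k * r\<^sup>2) \<le> M0 * k * L\<^sup>2" .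
        have "w powr (s + 1) * (P\<^sup>2 * ((n\<^sup>2 * k) * k * r\<^sup>2)) \<le> 2 powr (s + 1) * (M0 * k * L\<^sup>2)"
          using M0pos k0 by (intro mult_mono[OF w2 e1]) auto
        also have "\<dots> = Bc * L\<^sup>2 * k" unfolding Bc_def by (simp add: mult_ac)
        finally have e2: "w powr (s + 1) * (P\<^sup>2 * ((n\<^sup>2 * k) * k * r\<^sup>2)) \<le> Bc * L\<^sup>2 * k" .
        have "\<Phi> \<xi> \<le> ennreal (Bc * L\<^sup>2) * (indicator (ball 0 1) \<xi> * ennreal (cmod (Khat \<xi>)))"
          unfolding \<Phi>v ind using e2 Bc0 k0 unfolding k_def[symmetric]
          by (simp add: ennreal_mult[symmetric] ennreal_leI)
        then show ?thesis by (rule order_trans) simp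
      next
        case False
        then have n1: "n \<ge> 1" by simp
        have wn: "w \<le> 2 * n\<^sup>2" unfolding w_def using n1 by (simp add: one_le_power)
        have "w * ((n\<^sup>2 * k) * k) \<le> (2 * n\<^sup>2) * ((n\<^sup>2 * k) * k)"
          using wn n0 k0 by (intro mult_right_mono) auto
        also have "\<dots> = 2 * (n\<^sup>2 * k)\<^sup>2" by (simp add: power2_eq_square mult_ac)
        also have "\<dots> \<le> 2 * M0\<^sup>2" using nk n0 k0 by (intro mult_left_mono power_mono) auto
        finally have e0: "w * ((n\<^sup>2 * k) * k) \<le> 2 * M0\<^sup>2" .
        have "w powr (s + 1) * (P\<^sup>2 * ((n\<^sup>2 * k) * k * r\<^sup>2)) = w powr s * (P\<^sup>2 * r\<^sup>2) * (w * ((n\<^sup>2 * k) * k))"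
          using w1 by (simp add: powr_add mult_ac)
        also have "\<dots> \<le> w powr s * (P\<^sup>2 * r\<^sup>2) * (2 * M0\<^sup>2)"
          using e0 by (intro mult_left_mono) auto
        also have "\<dots> = A * (w powr s * r\<^sup>2)" unfolding A_def by (simp add: mult_ac)
        finally have e3: "w powr (s + 1) * (P\<^sup>2 * ((n\<^sup>2 * k) * k * r\<^sup>2)) \<le> A * (w powr s * r\<^sup>2)" .
        have "\<Phi> \<xi> \<le> ennreal (A * ((1 + (norm \<xi>)\<^sup>2) powr s * (cmod (R \<xi>))\<^sup>2))"
          unfolding \<Phi>v using e3 unfolding w_def n_def r_def by (rule ennreal_leI)
        then show ?thesis by (rule order_trans) simp
      qed
    qed
    have "(\<integral>\<^sup>+\<xi>. \<Phi> \<xi> \<partial>lborel) \<le> (\<integral>\<^sup>+\<xi>. ennreal (A * ((1 + (norm \<xi>)\<^sup>2) powr s * (cmod (R \<xi>))\<^sup>2))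
        + ennreal (Bc * L\<^sup>2) * (indicator (ball 0 1) \<xi> * ennreal (cmod (Khat \<xi>))) \<partial>lborel)"
      by (rule nn_integral_mono) (rule pw)
    also have "\<dots> = (\<integral>\<^sup>+\<xi>. ennreal A * ennreal ((1 + (norm \<xi>)\<^sup>2) powr s * (cmod (R \<xi>))\<^sup>2) \<partial>lborel)
        + (\<integral>\<^sup>+\<xi>. ennreal (Bc * L\<^sup>2) * (indicator (ball 0 1) \<xi> * ennreal (cmod (Khat \<xi>))) \<partial>(lborel::(real^'n) measure))"
      using A0 apply (subst nn_integral_add[symmetric])
      by (auto simp: ennreal_mult)
    also have "\<dots> = ennreal A * sobolevF_sq s R + ennreal (Bc * L\<^sup>2) * B"
      unfolding sobolevF_sq_def B_def
      by (subst nn_integral_cmult, measurable)+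
    also have "\<dots> = ennreal (A * Hr + Bc * L\<^sup>2 * Br)"
      unfolding HHr BBr using A0 Bc0 Hr0 Br0 by (simp add: ennreal_mult[symmetric] ennreal_plus[symmetric] del: ennreal_plus)
    finally have intb: "(\<integral>\<^sup>+\<xi>. \<Phi> \<xi> \<partial>lborel) \<le> ennreal (A * Hr + Bc * L\<^sup>2 * Br)" .
    have T0: "A * Hr + Bc * L\<^sup>2 * Br \<ge> 0" using A0 Bc0 Hr0 Br0 by simp
    have g1: "grad_nonlocal_Hs_norm (s + 1) Khat \<rho> \<le> ennreal (sqrt (A * Hr + Bc * L\<^sup>2 * Br))"
      unfolding grad_nonlocal_Hs_norm_def sumeq by (rule ennsqrt_le[OF intb T0])
    have "sqrt (A * Hr + Bc * L\<^sup>2 * Br) \<le> sqrt (A * Hr) + sqrt (Bc * L\<^sup>2 * Br)"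
      using A0 Bc0 Hr0 Br0 by (intro sqrt_add_le_add_sqrt) auto
    also have "\<dots> = sqrt A * sqrt Hr + sqrt (Bc * Br) * L"
      using L0 by (simp add: real_sqrt_mult mult_ac)
    also have "\<dots> \<le> C1 * (sqrt Hr + L)"
      unfolding C1_def using A0 Bc0 Hr0 Br0 L0 by (simp add: algebra_simps)
    finally have g2: "sqrt (A * Hr + Bc * L\<^sup>2 * Br) \<le> C1 * (sqrt Hr + L)" .
    have C10: "C1 \<ge> 0" unfolding C1_def using A0 Bc0 Br0 by simp
    have part1: "grad_nonlocal_Hs_norm (s + 1) Khat \<rho> \<le> ennreal C1 * (Hs_norm s \<rho> + L1_norm \<rho>)"
    proof -
      have "ennreal C1 * (Hs_norm s \<rho> + L1_norm \<rho>) = ennreal (C1 * (sqrt Hr + L))"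
        unfolding Hs L1 using C10 Hr0 L0 by (simp add: ennreal_mult ennreal_plus[symmetric] del: ennreal_plus)
      then show ?thesis using g1 g2 by (metis ennreal_leI order_trans)
    qed
    have part2: "esssup lborel (\<lambda>x. ereal (cmod (nonlocal Khat \<rho> x)))
                 \<le> ereal (C2 * (enn2real (Hs_norm s \<rho>) + enn2real (L1_norm \<rho>)))"
      if sd: "s > real CARD('n) / 2"
    proof -
      have Wfin: "W < \<infinity>" unfolding W_def using sd s_nonneg by (intro weight_finite) auto
      have WWr: "W = ennreal Wr" using Wfin unfolding Wr_def by (auto simp: less_top)
      define X where "X = (\<integral>\<^sup>+\<xi>. ennreal (cmod (R \<xi>)) \<partial>(lborel::(real^'n) measure))"
      have Xeq: "X = (\<integral>\<^sup>+\<xi>. ennreal ((1 + (norm \<xi>)\<^sup>2) powr (s/2) * cmod (R \<xi>)) * ennreal ((1 + (norm \<xi>)\<^sup>2) powr (-s/2)) \<partial>lborel)"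
        unfolding X_def
      proof (rule nn_integral_cong)
        fix \<xi> :: "real^'n"
        have w0: "1 + (norm \<xi>)\<^sup>2 > 0" by (simp add: add_pos_nonneg)
        have "(1 + (norm \<xi>)\<^sup>2) powr (s/2) * (1 + (norm \<xi>)\<^sup>2) powr (-s/2) = 1"
          using w0 by (simp add: powr_add[symmetric])
        then show "ennreal (cmod (R \<xi>)) = ennreal ((1 + (norm \<xi>)\<^sup>2) powr (s/2) * cmod (R \<xi>)) * ennreal ((1 + (norm \<xi>)\<^sup>2) powr (-s/2))"
          by (simp add: ennreal_mult[symmetric] mult_ac)
      qed
      have "X\<^sup>2 \<le> (\<integral>\<^sup>+\<xi>. (ennreal ((1 + (norm \<xi>)\<^sup>2) powr (s/2) * cmod (R \<xi>)))\<^sup>2 \<partial>lborel)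
               * (\<integral>\<^sup>+\<xi>. (ennreal ((1 + (norm \<xi>)\<^sup>2) powr (-s/2)))\<^sup>2 \<partial>(lborel::(real^'n) measure))"
        unfolding Xeq by (rule Cauchy_Schwarz_nn_integral) measurable
      also have "(\<integral>\<^sup>+\<xi>. (ennreal ((1 + (norm \<xi>)\<^sup>2) powr (s/2) * cmod (R \<xi>)))\<^sup>2 \<partial>lborel) = sobolevF_sq s R"
        unfolding sobolevF_sq_def
      proof (rule nn_integral_cong)
        fix \<xi> :: "real^'n"
        have w0: "1 + (norm \<xi>)\<^sup>2 > 0" by (simp add: add_pos_nonneg)
        have "((1 + (norm \<xi>)\<^sup>2) powr (s/2))\<^sup>2 = (1 + (norm \<xi>)\<^sup>2) powr s"
          using w0 by (simp add: power2_eq_square powr_add[symmetric])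
        then show "(ennreal ((1 + (norm \<xi>)\<^sup>2) powr (s/2) * cmod (R \<xi>)))\<^sup>2 = ennreal ((1 + (norm \<xi>)\<^sup>2) powr s * (cmod (R \<xi>))\<^sup>2)"
          by (simp add: ennreal_power power_mult_distrib)
      qed
      also have "(\<integral>\<^sup>+\<xi>. (ennreal ((1 + (norm \<xi>)\<^sup>2) powr (-s/2)))\<^sup>2 \<partial>(lborel::(real^'n) measure)) = W"
        unfolding W_def
      proof (rule nn_integral_cong)
        fix \<xi> :: "real^'n"
        have w0: "1 + (norm \<xi>)\<^sup>2 > 0" by (simp add: add_pos_nonneg)
        have "((1 + (norm \<xi>)\<^sup>2) powr (-s/2))\<^sup>2 = (1 + (norm \<xi>)\<^sup>2) powr (-s)"
          using w0 by (simp add: power2_eq_square powr_add[symmetric])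
        then show "(ennreal ((1 + (norm \<xi>)\<^sup>2) powr (-s/2)))\<^sup>2 = ennreal ((1 + (norm \<xi>)\<^sup>2) powr (-s))"
          by (simp add: ennreal_power)
      qed
      finally have "X\<^sup>2 \<le> ennreal (Hr * Wr)" unfolding HHr WWr using Hr0 Wr0 by (simp add: ennreal_mult)
      then have Xb: "X \<le> ennreal (sqrt (Hr * Wr))" using Hr0 Wr0 by (intro ennreal_sq_le) auto
      define T2 where "T2 = P * c * L * Br + P * M0 * sqrt (Hr * Wr)"
      have T20: "T2 \<ge> 0" unfolding T2_def using P0 c0 L0 Br0 M0pos Hr0 Wr0 by simp
      have pw2: "ennreal (cmod (nonlocal_hat Khat \<rho> \<xi>)) \<le> ennreal (P * c * L) * (indicator (ball 0 1) \<xi> * ennreal (cmod (Khat \<xi>)))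
          + ennreal (P * M0) * ennreal (cmod (R \<xi>))" for \<xi> :: "real^'n"
      proof (cases "norm \<xi> < 1")
        case True
        have "P * cmod (Khat \<xi>) * cmod (R \<xi>) \<le> P * cmod (Khat \<xi>) * (c * L)"
          using P0 RL[of \<xi>] by (intro mult_left_mono) auto
        then have "ennreal (cmod (nonlocal_hat Khat \<rho> \<xi>)) \<le> ennreal (P * c * L) * (indicator (ball 0 1) \<xi> * ennreal (cmod (Khat \<xi>)))"
          using True P0 c0 L0 unfolding hnorm
          by (simp add: indicator_def ennreal_mult[symmetric] mult_ac ennreal_leI)
        then show ?thesis by (rule order_trans) simp
      next
        case False
        have "P * cmod (Khat \<xi>) * cmod (R \<xi>) \<le> P * M0 * cmod (R \<xi>)"
          using P0 KM[of \<xi>] False by (intro mult_right_mono mult_left_mono) auto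
        then have "ennreal (cmod (nonlocal_hat Khat \<rho> \<xi>)) \<le> ennreal (P * M0) * ennreal (cmod (R \<xi>))"
          using P0 M0pos unfolding hnorm by (simp add: ennreal_mult[symmetric] ennreal_leI)
        then show ?thesis by (rule order_trans) simp
      qed
      have "(\<integral>\<^sup>+\<xi>. ennreal (cmod (nonlocal_hat Khat \<rho> \<xi>)) \<partial>lborel)
          \<le> (\<integral>\<^sup>+\<xi>. ennreal (P * c * L) * (indicator (ball 0 1) \<xi> * ennreal (cmod (Khat \<xi>)))
          + ennreal (P * M0) * ennreal (cmod (R \<xi>)) \<partial>(lborel::(real^'n) measure))"
        by (rule nn_integral_mono) (rule pw2)
      also have "\<dots> = ennreal (P * c * L) * B + ennreal (P * M0) * X"
        unfolding B_def X_def
        apply (subst nn_integral_add)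
          apply measurable
        apply (subst nn_integral_cmult, measurable)+
        done
      also have "\<dots> \<le> ennreal (P * c * L) * ennreal Br + ennreal (P * M0) * ennreal (sqrt (Hr * Wr))"
        unfolding BBr by (intro add_mono mult_left_mono Xb) auto
      also have "\<dots> = ennreal T2"
        unfolding T2_def using P0 c0 L0 Br0 M0pos Hr0 Wr0
        by (simp add: ennreal_mult[symmetric] ennreal_plus[symmetric] del: ennreal_plus)
      finally have hint: "(\<integral>\<^sup>+\<xi>. ennreal (cmod (nonlocal_hat Khat \<rho> \<xi>)) \<partial>lborel) \<le> ennreal T2" .
      have ptw: "cmod (nonlocal Khat \<rho> x) \<le> C2 * (sqrt Hr + L)" for x
      proof -
        have "cmod (nonlocal Khat \<rho> x) = c * cmod (LINT \<xi>|lborel. cis (x \<bullet> \<xi>) * nonlocal_hat Khat \<rho> \<xi>)"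
          unfolding nonlocal_def inv_fourier_def c_def by (simp add: norm_mult)
        also have "\<dots> \<le> c * (\<integral>\<xi>. cmod (cis (x \<bullet> \<xi>) * nonlocal_hat Khat \<rho> \<xi>) \<partial>lborel)"
          using c0 by (intro mult_left_mono integral_norm_bound) auto
        also have "(\<integral>\<xi>. cmod (cis (x \<bullet> \<xi>) * nonlocal_hat Khat \<rho> \<xi>) \<partial>lborel) = (\<integral>\<xi>. cmod (nonlocal_hat Khat \<rho> \<xi>) \<partial>lborel)"
          by (simp add: norm_mult)
        also have "\<dots> = enn2real (\<integral>\<^sup>+\<xi>. ennreal (cmod (nonlocal_hat Khat \<rho> \<xi>)) \<partial>lborel)"
          by (rule integral_eq_nn_integral) auto
        also have "\<dots> \<le> T2" using hint T20 enn2real_mono[OF hint] by simp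
        finally have "cmod (nonlocal Khat \<rho> x) \<le> c * T2" using c0 by simp
        also have "c * T2 = (c * P) * c * L * Br + (c * P) * M0 * sqrt Hr * sqrt Wr"
          unfolding T2_def by (simp add: real_sqrt_mult algebra_simps)
        also have "\<dots> = c * L * Br + M0 * sqrt Wr * sqrt Hr" using cP by simp
        also have "\<dots> \<le> C2 * (sqrt Hr + L)"
          unfolding C2_def using c0 L0 Br0 M0pos Hr0 Wr0 by (simp add: algebra_simps)
        finally show ?thesis .
      qed
      have e1: "enn2real (Hs_norm s \<rho>) = sqrt Hr" using Hs Hr0 by simp
      have e2: "enn2real (L1_norm \<rho>) = L" using L1 L0 by simp
      have nm: "(\<lambda>x. ereal (cmod (nonlocal Khat \<rho> x))) \<in> borel_measurable lborel"
      proof -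
        have "nonlocal Khat \<rho> \<in> borel_measurable lborel" unfolding nonlocal_def
          by (rule inv_fourier_meas) (rule hm)
        then show ?thesis by measurable
      qed
      show ?thesis unfolding e1 e2
        by (rule esssup_I[OF nm]) (use ptw in auto)
    qed
    show ?thesis using part1 part2 by blast
  qed
  show ?thesis
  proof
    show "\<exists>C::real. \<forall>\<rho>. in_Hs_L1 s \<rho> \<longrightarrow>
            grad_nonlocal_Hs_norm (s + 1) Khat \<rho> \<le> ennreal C * (Hs_norm s \<rho> + L1_norm \<rho>)"
      using key by blast
    show "s > real CARD('n) / 2 \<longrightarrow>
            (\<exists>C::real. \<forall>\<rho>. in_Hs_L1 s \<rho> \<longrightarrow>
               esssup lborel (\<lambda>x. ereal (cmod (nonlocal Khat \<rho> x)))
                 \<le> ereal (C * (enn2real (Hs_norm s \<rho>) + enn2real (L1_norm \<rho>))))"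
      using key by blast
  qed
qed

end
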